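(* Let $\boldsymbol{A}$ be the adjacency matrix of an undirected graph without self-loops on a finite vertex set $\boldsymbol{V}=\{1,\dots,N\}$. Let $\mathcal{R}_e\subset\boldsymbol{V}$ be a nonempty set of egos and $\mathcal{R}_a\subset\boldsymbol{V}\setminus\mathcal{R}_e$ a nonempty set of alters, $n_a=|\mathcal{R}_a|$, each alter $j$ having a unique recruiting ego $e(j)\in\mathcal{R}_e$ with $A_{j\,e(j)}=1$. Let $\widetilde{\boldsymbol{A}}$ have $\widetilde A_{ij}=\widetilde A_{ji}=1$ iff $i\in\mathcal{R}_a$ and $j=e(i)$ (other entries $0$), and $\widetilde F_i=\mathbb{I}\{\sum_{j\neq i}Z_j\widetilde A_{ij}>0\}$. Let $\boldsymbol{Z}\in\{0,1\}^N$ have independent components with $\Pr(Z_i=1)=p_z\,\mathbb{I}\{i\in\mathcal{R}_e\}$, $p_z\in(0,1)$. For an alter $i$, let $S_i=\sum_{j\neq i}Z_jA_{ij}$ and define the three-level exposure $F_i=0$ if $S_i=0$, $F_i=1$ if $S_i=1$, $F_i=2+$ if $S_i\ge2$. Each alter $i$ has fixed real potential outcomes $Y_i(0,0),Y_i(0,1),Y_i(0,2+)$ and observed outcome $Y_i=Y_i(0,F_i)$. Assume there is a constant $\delta$ with $Y_i(0,2+)-Y_i(0,1)=\delta[Y_i(0,1)-Y_i(0,0)]$ for all $i\in\mathcal{R}_a$. Let $S_{i,-e(i)}=\sum_{j\in\mathcal{R}_e\setminus\{e(i)\}}Z_jA_{ij}$, $\pi^*_{i,0}=\Pr(S_{i,-e(i)}=0)$,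 $\pi^*_{i,1}=\Pr(S_{i,-e(i)}=1)$ (over $\boldsymbol{Z}$), and assume $\pi^*_{i,0}+\pi^*_{i,1}\delta\neq0$ for all $i\in\mathcal{R}_a$. Define $$IE=\frac1{n_a}\sum_{i\in\mathcal{R}_a}[Y_i(0,1)-Y_i(0,0)],\qquad \widehat{IE}=\frac1{n_a}\sum_{i\in\mathcal{R}_a}\Big[\frac{\mathbb{I}\{\widetilde F_i=1\}Y_i}{p_z}-\frac{\mathbb{I}\{\widetilde F_i=0\}Y_i}{1-p_z}\Big],$$ $$\widehat{IE}_{adj}=\frac1{n_a}\sum_{i\in\mathcal{R}_a}\frac{1}{\pi^*_{i,0}+\pi^*_{i,1}\delta}\Big[\frac{\mathbb{I}\{\widetilde F_i=1\}Y_i}{p_z}-\frac{\mathbb{I}\{\widetilde F_i=0\}Y_i}{1-p_z}\Big].$$ Then $\mathbb{E}_{\boldsymbol{Z}}[\widehat{IE}]=\frac1{n_a}\sum_{i\in\mathcal{R}_a}(\pi^*_{i,0}+\pi^*_{i,1}\delta)[Y_i(0,1)-Y_i(0,0)]$ and $\mathbb{E}_{\boldsymbol{Z}}[\widehat{IE}_{adj}]=IE$.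
   Context: Design-based setting: the network, the sample, the recruitment map and the potential outcomes are fixed; only $\boldsymbol{Z}$ is random and expectations/probabilities are over $\boldsymbol{Z}$. Alters are never treated, so their outcomes depend only on the three-level exposure. *)

theory Defs
  imports "HOL-Probability.Probability"
begin

text \<open>Vertex set V = {1..N}; Z is a 0/1 vector encoded as a boolean function
(Z j = True means Z_j = 1), equal to False outside V.\<close>

datatype exposure = Exp0 | Exp1 | Exp2plus

definition Zdist :: "nat \<Rightarrow> nat set \<Rightarrow> real \<Rightarrow> (nat \<Rightarrow> bool) pmf" where
  "Zdist N Rego pz = Pi_pmf {1..N} False (\<lambda>i. bernoulli_pmf (pz * of_bool (i \<in> Rego)))"

definition S :: "nat \<Rightarrow> (nat \<Rightarrow> nat \<Rightarrow> bool) \<Rightarrow> (nat \<Rightarrow> bool) \<Rightarrow> nat \<Rightarrow> nat" where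
  "S N A Z i = (\<Sum>j\<in>{1..N} - {i}. of_bool (Z j) * of_bool (A i j))"

definition F :: "nat \<Rightarrow> (nat \<Rightarrow> nat \<Rightarrow> bool) \<Rightarrow> (nat \<Rightarrow> bool) \<Rightarrow> nat \<Rightarrow> exposure" where
  "F N A Z i = (if S N A Z i = 0 then Exp0 else if S N A Z i = 1 then Exp1 else Exp2plus)"

definition Atil :: "nat set \<Rightarrow> (nat \<Rightarrow> nat) \<Rightarrow> nat \<Rightarrow> nat \<Rightarrow> bool" where
  "Atil Ralt e i j = ((i \<in> Ralt \<and> j = e i) \<or> (j \<in> Ralt \<and> i = e j))"

definition Ftil :: "nat \<Rightarrow> nat set \<Rightarrow> (nat \<Rightarrow> nat) \<Rightarrow> (nat \<Rightarrow> bool) \<Rightarrow> nat \<Rightarrow> bool" where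
  "Ftil N Ralt e Z i = ((\<Sum>j\<in>{1..N} - {i}. of_bool (Z j) * of_bool (Atil Ralt e i j)) > (0::nat))"

definition Sminus :: "nat set \<Rightarrow> (nat \<Rightarrow> nat \<Rightarrow> bool) \<Rightarrow> (nat \<Rightarrow> nat) \<Rightarrow> (nat \<Rightarrow> bool) \<Rightarrow> nat \<Rightarrow> nat" where
  "Sminus Rego A e Z i = (\<Sum>j\<in>Rego - {e i}. of_bool (Z j) * of_bool (A i j))"

definition pistar0 :: "nat \<Rightarrow> nat set \<Rightarrow> real \<Rightarrow> (nat \<Rightarrow> nat \<Rightarrow> bool) \<Rightarrow> (nat \<Rightarrow> nat) \<Rightarrow> nat \<Rightarrow> real" where
  "pistar0 N Rego pz A e i = measure_pmf.prob (Zdist N Rego pz) {Z. Sminus Rego A e Z i = 0}"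

definition pistar1 :: "nat \<Rightarrow> nat set \<Rightarrow> real \<Rightarrow> (nat \<Rightarrow> nat \<Rightarrow> bool) \<Rightarrow> (nat \<Rightarrow> nat) \<Rightarrow> nat \<Rightarrow> real" where
  "pistar1 N Rego pz A e i = measure_pmf.prob (Zdist N Rego pz) {Z. Sminus Rego A e Z i = 1}"

text \<open>Observed outcome Y_i = Y_i(0, F_i); Y i f stands for Y_i(0,f).\<close>
definition Yobs :: "nat \<Rightarrow> (nat \<Rightarrow> nat \<Rightarrow> bool) \<Rightarrow> (nat \<Rightarrow> exposure \<Rightarrow> real) \<Rightarrow> (nat \<Rightarrow> bool) \<Rightarrow> nat \<Rightarrow> real" where
  "Yobs N A Y Z i = Y i (F N A Z i)"

definition IE :: "nat set \<Rightarrow> (nat \<Rightarrow> exposure \<Rightarrow> real) \<Rightarrow> real" where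
  "IE Ralt Y = (1 / real (card Ralt)) * (\<Sum>i\<in>Ralt. Y i Exp1 - Y i Exp0)"

definition IEhat :: "nat \<Rightarrow> nat set \<Rightarrow> (nat \<Rightarrow> nat) \<Rightarrow> (nat \<Rightarrow> nat \<Rightarrow> bool) \<Rightarrow> real \<Rightarrow>
    (nat \<Rightarrow> exposure \<Rightarrow> real) \<Rightarrow> (nat \<Rightarrow> bool) \<Rightarrow> real" where
  "IEhat N Ralt e A pz Y Z = (1 / real (card Ralt)) *
     (\<Sum>i\<in>Ralt. of_bool (Ftil N Ralt e Z i) * Yobs N A Y Z i / pz
            - of_bool (\<not> Ftil N Ralt e Z i) * Yobs N A Y Z i / (1 - pz))"

definition IEhat_adj :: "nat \<Rightarrow> nat set \<Rightarrow> nat set \<Rightarrow> (nat \<Rightarrow> nat) \<Rightarrow> (nat \<Rightarrow> nat \<Rightarrow> bool) \<Rightarrow> real \<Rightarrow> real \<Rightarrow>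
    (nat \<Rightarrow> exposure \<Rightarrow> real) \<Rightarrow> (nat \<Rightarrow> bool) \<Rightarrow> real" where
  "IEhat_adj N Rego Ralt e A pz \<delta> Y Z = (1 / real (card Ralt)) *
     (\<Sum>i\<in>Ralt. (1 / (pistar0 N Rego pz A e i + pistar1 N Rego pz A e i * \<delta>)) *
            (of_bool (Ftil N Ralt e Z i) * Yobs N A Y Z i / pz
             - of_bool (\<not> Ftil N Ralt e Z i) * Yobs N A Y Z i / (1 - pz)))"

end

theory Submission imports Defs begin

lemma finite_set_q:
  "finite (set_pmf (Pi_pmf (B::nat set) False (\<lambda>i. bernoulli_pmf (pz * of_bool (i \<in> Rego))))) "
  if "finite B"
proof -
  have "finite (PiE_dflt B False (set_pmf \<circ> (\<lambda>i. bernoulli_pmf (pz * of_bool (i \<in> Rego)))))"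
    by (rule finite_PiE_dflt[OF that]) (rule finite_subset[OF subset_UNIV], simp)
  then show ?thesis by (simp only: set_Pi_pmf[OF that])
qed

lemma set_q:
  assumes "finite B" "f \<in> set_pmf (Pi_pmf (B::nat set) False (\<lambda>i. bernoulli_pmf (pz * of_bool (i \<in> Rego))))"
    "0 \<le> pz" "pz \<le> 1" "f j"
  shows "j \<in> B \<and> j \<in> Rego"
proof -
  have PE: "f \<in> PiE_dflt B False (set_pmf \<circ> (\<lambda>i. bernoulli_pmf (pz * of_bool (i \<in> Rego))))"
    using assms(2) by (simp only: set_Pi_pmf[OF assms(1)])
  have 1: "j \<in> B"
  proof (rule ccontr)
    assume "j \<notin> B"
    then have "f j = False" using PE unfolding PiE_dflt_def by blast
    then show False using assms(5) by simp
  qed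
  have "f j \<in> set_pmf (bernoulli_pmf (pz * of_bool (j \<in> Rego)))"
    using PE 1 unfolding PiE_dflt_def by simp
  then have 2: "j \<in> Rego"
  proof (cases "j \<in> Rego")
    case False
    assume "f j \<in> set_pmf (bernoulli_pmf (pz * of_bool (j \<in> Rego)))"
    then have "pmf (bernoulli_pmf 0) True \<noteq> 0" using False assms(5) by (simp add: set_pmf_eq)
    then show ?thesis by simp
  qed simp
  show ?thesis using 1 2 by blast
qed

lemma decomp:
  fixes G :: "(nat \<Rightarrow> bool) \<Rightarrow> real"
  assumes k: "k \<in> Rego" "Rego \<subseteq> {1..N}" and pz: "0 < pz" "pz < 1"
  defines "q \<equiv> Pi_pmf ({1..N} - {k}) False (\<lambda>i. bernoulli_pmf (pz * of_bool (i \<in> Rego)))"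
  shows "measure_pmf.expectation (Zdist N Rego pz) G
     = pz * measure_pmf.expectation q (\<lambda>f. G (f(k:=True)))
       + (1 - pz) * measure_pmf.expectation q (\<lambda>f. G (f(k:=False)))"
proof -
  have kN: "k \<in> {1..N}" using k by blast
  have eq: "{1..N} = insert k ({1..N} - {k})" using kN by blast
  have Z: "Zdist N Rego pz = map_pmf (\<lambda>(y,f). f(k:=y)) (pair_pmf (bernoulli_pmf pz) q)"
    unfolding Zdist_def q_def
    by (subst eq, subst Pi_pmf_insert) (use k in auto)
  have fin: "finite (set_pmf q)" unfolding q_def by (rule finite_set_q) simp
  have "measure_pmf.expectation (Zdist N Rego pz) G
     = measure_pmf.expectation (pair_pmf (bernoulli_pmf pz) q) (\<lambda>(y,f). G (f(k:=y)))"
    unfolding Z by (simp add: case_prod_beta')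
  also have "\<dots> = (\<Sum>a\<in>UNIV \<times> set_pmf q. pmf (pair_pmf (bernoulli_pmf pz) q) a *\<^sub>R (\<lambda>(y,f). G (f(k:=y))) a)"
    by (rule integral_measure_pmf) (use fin in auto)
  also have "\<dots> = (\<Sum>y\<in>UNIV. \<Sum>f\<in>set_pmf q. pmf (bernoulli_pmf pz) y * (pmf q f * G (f(k:=y))))"
    unfolding sum.cartesian_product by (intro sum.cong) (auto simp: pmf_pair)
  also have "\<dots> = pz * (\<Sum>f\<in>set_pmf q. pmf q f * G (f(k:=True))) + (1 - pz) * (\<Sum>f\<in>set_pmf q. pmf q f * G (f(k:=False)))"
    using pz by (simp add: UNIV_bool sum_distrib_left)
  also have "(\<Sum>f\<in>set_pmf q. pmf q f * G (f(k:=True))) = measure_pmf.expectation q (\<lambda>f. G (f(k:=True)))"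
    by (subst integral_measure_pmf[of "set_pmf q"]) (use fin in auto)
  also have "(\<Sum>f\<in>set_pmf q. pmf q f * G (f(k:=False))) = measure_pmf.expectation q (\<lambda>f. G (f(k:=False)))"
    by (subst integral_measure_pmf[of "set_pmf q"]) (use fin in auto)
  finally show ?thesis .
qed

lemma Sminus_upd: "Sminus Rego A e (f(e i := y)) i = Sminus Rego A e f i"
  unfolding Sminus_def by (intro sum.cong) auto

lemma alter_facts:
  assumes A_V: "\<forall>i j. A i j \<longrightarrow> i \<in> {1..N} \<and> j \<in> {1..N}"
    and Re_sub: "Rego \<subseteq> {1..N}"
    and Ra_sub: "Ralt \<subseteq> {1..N} - Rego"
    and e_rec: "\<forall>j\<in>Ralt. e j \<in> Rego \<and> A j (e j)"
    and i: "i \<in> Ralt"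
    and f: "\<And>j. f j \<Longrightarrow> j \<in> Rego \<and> j \<noteq> e i"
  shows "Ftil N Ralt e (f(e i := y)) i = y"
    and "S N A (f(e i := y)) i = of_bool y + Sminus Rego A e f i"
proof -
  let ?k = "e i"
  have k: "?k \<in> Rego" "A i ?k" using e_rec i by auto
  have iR: "i \<notin> Rego" "i \<in> {1..N}" using Ra_sub i by auto
  have kN: "?k \<in> {1..N} - {i}" using k iR Re_sub by auto
  have finR: "finite Rego" using Re_sub finite_subset by blast
  have "(\<Sum>j\<in>{1..N} - {i}. of_bool ((f(?k := y)) j) * of_bool (Atil Ralt e i j))
      = (\<Sum>j\<in>{1..N} - {i}. if j = ?k then of_bool y else (0::nat))"
  proof (intro sum.cong refl)
    fix j assume j: "j \<in> {1..N} - {i}"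
    have "Atil Ralt e i j \<longleftrightarrow> j = ?k"
      using i iR e_rec unfolding Atil_def by auto
    then show "of_bool ((f(?k := y)) j) * of_bool (Atil Ralt e i j) = (if j = ?k then of_bool y else (0::nat))"
      by auto
  qed
  also have "\<dots> = of_bool y" using kN by simp
  finally show "Ftil N Ralt e (f(e i := y)) i = y" unfolding Ftil_def by simp
  have "S N A (f(e i := y)) i = (\<Sum>j\<in>Rego. of_bool ((f(?k := y)) j) * of_bool (A i j))"
    unfolding S_def
  proof (rule sum.mono_neutral_right)
    show "finite ({1..N} - {i})" by simp
    show "Rego \<subseteq> {1..N} - {i}" using Re_sub iR by auto
    show "\<forall>j\<in>{1..N} - {i} - Rego. of_bool ((f(?k := y)) j) * of_bool (A i j) = (0::nat)"
      using f k by auto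
  qed
  also have "\<dots> = of_bool ((f(?k := y)) ?k) * of_bool (A i ?k) + (\<Sum>j\<in>Rego - {?k}. of_bool ((f(?k := y)) j) * of_bool (A i j))"
    by (rule sum.remove[OF finR k(1)])
  also have "(\<Sum>j\<in>Rego - {?k}. of_bool ((f(?k := y)) j) * of_bool (A i j)) = Sminus Rego A e f i"
    unfolding Sminus_def by (intro sum.cong) auto
  also have "of_bool ((f(?k := y)) ?k) * of_bool (A i ?k) = (of_bool y :: nat)" using k by simp
  finally show "S N A (f(e i := y)) i = of_bool y + Sminus Rego A e f i" .
qed

lemma exp_of_bool: "measure_pmf.expectation p (\<lambda>x. of_bool (P x) :: real) = measure_pmf.prob p {x. P x}"
proof -
  have "(\<lambda>x. of_bool (P x) :: real) = indicator {x. P x}" by (auto simp: indicator_def fun_eq_iff)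
  then show ?thesis by simp
qed

lemma exp_cong_pmf:
  fixes f g :: "'a \<Rightarrow> real"
  assumes "\<And>x. x \<in> set_pmf p \<Longrightarrow> f x = g x"
  shows "measure_pmf.expectation p f = measure_pmf.expectation p g"
  using assms by (intro integral_cong_AE) (auto simp: AE_measure_pmf_iff)

lemma Fe_diff:
  fixes s :: nat and Yf :: "exposure \<Rightarrow> real" and \<delta> :: real
  assumes "Yf Exp2plus - Yf Exp1 = \<delta> * (Yf Exp1 - Yf Exp0)"
  shows "Yf (if Suc s = 0 then Exp0 else if Suc s = 1 then Exp1 else Exp2plus)
       - Yf (if s = 0 then Exp0 else if s = 1 then Exp1 else Exp2plus)
     = of_bool (s = 0) * (Yf Exp1 - Yf Exp0) + of_bool (s = 1) * (\<delta> * (Yf Exp1 - Yf Exp0))"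
  using assms by (cases "s = 0"; cases "s = 1") auto

lemma alter_exp:
  assumes A_V: "\<forall>i j. A i j \<longrightarrow> i \<in> {1..N} \<and> j \<in> {1..N}"
    and Re_sub: "Rego \<subseteq> {1..N}"
    and Ra_sub: "Ralt \<subseteq> {1..N} - Rego"
    and e_rec: "\<forall>j\<in>Ralt. e j \<in> Rego \<and> A j (e j)"
    and pz: "0 < pz" "pz < 1"
    and i: "i \<in> Ralt"
    and delta: "Y i Exp2plus - Y i Exp1 = \<delta> * (Y i Exp1 - Y i Exp0)"
  shows "measure_pmf.expectation (Zdist N Rego pz)
      (\<lambda>Z. of_bool (Ftil N Ralt e Z i) * Yobs N A Y Z i / pz
            - of_bool (\<not> Ftil N Ralt e Z i) * Yobs N A Y Z i / (1 - pz))
    = (pistar0 N Rego pz A e i + pistar1 N Rego pz A e i * \<delta>) * (Y i Exp1 - Y i Exp0)"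
proof -
  define k where "k = e i"
  have k: "k \<in> Rego" using e_rec i k_def by auto
  define q where "q = Pi_pmf ({1..N} - {k}) False (\<lambda>i. bernoulli_pmf (pz * of_bool (i \<in> Rego)))"
  have fin: "finite (set_pmf q)" unfolding q_def by (rule finite_set_q) simp
  have int: "\<And>g::(nat\<Rightarrow>bool)\<Rightarrow>real. integrable q g"
    by (rule integrable_measure_pmf_finite[OF fin])
  have sup: "j \<in> Rego \<and> j \<noteq> e i" if "f \<in> set_pmf q" "f j" for f j
    using set_q[of "{1..N} - {k}" f pz Rego j] that pz unfolding q_def k_def by auto
  define Fe where "Fe n = (if n = (0::nat) then Exp0 else if n = 1 then Exp1 else Exp2plus)" for n
  let ?T = "\<lambda>Z. of_bool (Ftil N Ralt e Z i) * Yobs N A Y Z i / pz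
            - of_bool (\<not> Ftil N Ralt e Z i) * Yobs N A Y Z i / (1 - pz)"
  have TT: "?T (f(k:=True)) = Y i (Fe (Suc (Sminus Rego A e f i)))  / pz" if "f \<in> set_pmf q" for f
  proof -
    note AF = alter_facts[OF A_V Re_sub Ra_sub e_rec i sup[OF that], where y=True]
    show ?thesis unfolding k_def using AF pz by (simp add: Yobs_def F_def Fe_def)
  qed
  have TF: "?T (f(k:=False)) = - Y i (Fe (Sminus Rego A e f i)) / (1 - pz)" if "f \<in> set_pmf q" for f
  proof -
    note AF = alter_facts[OF A_V Re_sub Ra_sub e_rec i sup[OF that], where y=False]
    show ?thesis unfolding k_def using AF pz by (simp add: Yobs_def F_def Fe_def)
  qed
  have "measure_pmf.expectation (Zdist N Rego pz) ?T
     = pz * measure_pmf.expectation q (\<lambda>f. ?T (f(k:=True)))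
       + (1 - pz) * measure_pmf.expectation q (\<lambda>f. ?T (f(k:=False)))"
    unfolding q_def by (rule decomp[OF k Re_sub pz])
  also have "measure_pmf.expectation q (\<lambda>f. ?T (f(k:=True)))
     = measure_pmf.expectation q (\<lambda>f. Y i (Fe (Suc (Sminus Rego A e f i)))  / pz)"
    by (rule exp_cong_pmf) (rule TT)
  also have "measure_pmf.expectation q (\<lambda>f. ?T (f(k:=False)))
     = measure_pmf.expectation q (\<lambda>f. - Y i (Fe (Sminus Rego A e f i)) / (1 - pz))"
    by (rule exp_cong_pmf) (rule TF)
  also have "pz * measure_pmf.expectation q (\<lambda>f. Y i (Fe (Suc (Sminus Rego A e f i)))  / pz)
     + (1 - pz) * measure_pmf.expectation q (\<lambda>f. - Y i (Fe (Sminus Rego A e f i)) / (1 - pz))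
     = measure_pmf.expectation q (\<lambda>f. Y i (Fe (Suc (Sminus Rego A e f i))))
       - measure_pmf.expectation q (\<lambda>f. Y i (Fe (Sminus Rego A e f i)))"
  proof -
    have a: "measure_pmf.expectation q (\<lambda>f. Y i (Fe (Suc (Sminus Rego A e f i)))  / pz)
       = measure_pmf.expectation q (\<lambda>f. Y i (Fe (Suc (Sminus Rego A e f i)))) / pz"
      by (rule integral_divide_zero)
    have b: "measure_pmf.expectation q (\<lambda>f. - Y i (Fe (Sminus Rego A e f i)) / (1 - pz))
       = - measure_pmf.expectation q (\<lambda>f. Y i (Fe (Sminus Rego A e f i))) / (1 - pz)"
      by (subst integral_divide_zero) (subst integral_minus, rule refl)
    show ?thesis unfolding a b using pz by (simp add: field_simps)
  qed
  also have "\<dots> = measure_pmf.expectation q (\<lambda>f. Y i (Fe (Suc (Sminus Rego A e f i))) - Y i (Fe (Sminus Rego A e f i)))"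
    by (rule Bochner_Integration.integral_diff[symmetric]) (rule int)+
  also have "\<dots> = measure_pmf.expectation q (\<lambda>f. of_bool (Sminus Rego A e f i = 0) * (Y i Exp1 - Y i Exp0)
        + of_bool (Sminus Rego A e f i = 1) * (\<delta> * (Y i Exp1 - Y i Exp0)))"
    unfolding Fe_def by (intro Bochner_Integration.integral_cong refl) (simp only: Fe_diff[OF delta])
  also have "\<dots> = measure_pmf.prob q {f. Sminus Rego A e f i = 0} * (Y i Exp1 - Y i Exp0)
        + measure_pmf.prob q {f. Sminus Rego A e f i = 1} * (\<delta> * (Y i Exp1 - Y i Exp0))"
    apply (subst Bochner_Integration.integral_add[OF int int])
    apply (subst integral_mult_left_zero)+
    apply (simp only: exp_of_bool)
    done
  also have "measure_pmf.prob q {f. Sminus Rego A e f i = 0} = pistar0 N Rego pz A e i"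
  proof -
    have "pistar0 N Rego pz A e i = measure_pmf.expectation (Zdist N Rego pz) (\<lambda>Z. of_bool (Sminus Rego A e Z i = 0))"
      unfolding pistar0_def by (simp add: exp_of_bool)
    also have "\<dots> = pz * measure_pmf.expectation q (\<lambda>f. of_bool (Sminus Rego A e (f(k:=True)) i = 0))
       + (1 - pz) * measure_pmf.expectation q (\<lambda>f. of_bool (Sminus Rego A e (f(k:=False)) i = 0))"
      unfolding q_def by (rule decomp[OF k Re_sub pz])
    also have "\<dots> = measure_pmf.expectation q (\<lambda>f. of_bool (Sminus Rego A e f i = 0))"
      unfolding k_def Sminus_upd by (simp add: left_diff_distrib)
    also have "\<dots> = measure_pmf.prob q {f. Sminus Rego A e f i = 0}"
      by (rule exp_of_bool)
    finally show ?thesis by simp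
  qed
  also have "measure_pmf.prob q {f. Sminus Rego A e f i = 1} = pistar1 N Rego pz A e i"
  proof -
    have "pistar1 N Rego pz A e i = measure_pmf.expectation (Zdist N Rego pz) (\<lambda>Z. of_bool (Sminus Rego A e Z i = 1))"
      unfolding pistar1_def by (simp add: exp_of_bool)
    also have "\<dots> = pz * measure_pmf.expectation q (\<lambda>f. of_bool (Sminus Rego A e (f(k:=True)) i = 1))
       + (1 - pz) * measure_pmf.expectation q (\<lambda>f. of_bool (Sminus Rego A e (f(k:=False)) i = 1))"
      unfolding q_def by (rule decomp[OF k Re_sub pz])
    also have "\<dots> = measure_pmf.expectation q (\<lambda>f. of_bool (Sminus Rego A e f i = 1))"
      unfolding k_def Sminus_upd by (simp add: left_diff_distrib)
    also have "\<dots> = measure_pmf.prob q {f. Sminus Rego A e f i = 1}"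
      by (rule exp_of_bool)
    finally show ?thesis by simp
  qed
  finally show ?thesis by (simp add: distrib_right mult.assoc)
qed

theorem mainTheorem5:
  fixes N :: nat and A :: "nat \<Rightarrow> nat \<Rightarrow> bool"
    and Rego Ralt :: "nat set" and e :: "nat \<Rightarrow> nat"
    and pz \<delta> :: real and Y :: "nat \<Rightarrow> exposure \<Rightarrow> real"
  assumes A_sym: "\<forall>i j. A i j = A j i"
    and A_noloop: "\<forall>i. \<not> A i i"
    and A_V: "\<forall>i j. A i j \<longrightarrow> i \<in> {1..N} \<and> j \<in> {1..N}"
    and Re_sub: "Rego \<subseteq> {1..N}" and Re_ne: "Rego \<noteq> {}"
    and Ra_sub: "Ralt \<subseteq> {1..N} - Rego" and Ra_ne: "Ralt \<noteq> {}"
    and e_rec: "\<forall>j\<in>Ralt. e j \<in> Rego \<and> A j (e j)"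
    and pz: "0 < pz" "pz < 1"
    and delta: "\<forall>i\<in>Ralt. Y i Exp2plus - Y i Exp1 = \<delta> * (Y i Exp1 - Y i Exp0)"
    and nonzero: "\<forall>i\<in>Ralt. pistar0 N Rego pz A e i + pistar1 N Rego pz A e i * \<delta> \<noteq> 0"
  shows "measure_pmf.expectation (Zdist N Rego pz) (IEhat N Ralt e A pz Y)
           = (1 / real (card Ralt)) * (\<Sum>i\<in>Ralt. (pistar0 N Rego pz A e i + pistar1 N Rego pz A e i * \<delta>)
                                              * (Y i Exp1 - Y i Exp0))
         \<and> measure_pmf.expectation (Zdist N Rego pz) (IEhat_adj N Rego Ralt e A pz \<delta> Y) = IE Ralt Y"
proof -
  have finZ: "finite (set_pmf (Zdist N Rego pz))" unfolding Zdist_def by (rule finite_set_q) simp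
  have intZ: "\<And>g::(nat\<Rightarrow>bool)\<Rightarrow>real. integrable (Zdist N Rego pz) g"
    by (rule integrable_measure_pmf_finite[OF finZ])
  let ?T = "\<lambda>i Z. of_bool (Ftil N Ralt e Z i) * Yobs N A Y Z i / pz
            - of_bool (\<not> Ftil N Ralt e Z i) * Yobs N A Y Z i / (1 - pz)"
  let ?c = "\<lambda>i. pistar0 N Rego pz A e i + pistar1 N Rego pz A e i * \<delta>"
  have ET: "measure_pmf.expectation (Zdist N Rego pz) (?T i) = ?c i * (Y i Exp1 - Y i Exp0)"
    if "i \<in> Ralt" for i
  proof -
    have d: "Y i Exp2plus - Y i Exp1 = \<delta> * (Y i Exp1 - Y i Exp0)" using delta that by blast
    show ?thesis by (rule alter_exp[OF A_V Re_sub Ra_sub e_rec pz that]) (rule d)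
  qed
  have "measure_pmf.expectation (Zdist N Rego pz) (IEhat N Ralt e A pz Y)
     = (1 / real (card Ralt)) * (\<Sum>i\<in>Ralt. measure_pmf.expectation (Zdist N Rego pz) (?T i))"
    unfolding IEhat_def by (simp add: intZ Bochner_Integration.integral_sum)
  also have "\<dots> = (1 / real (card Ralt)) * (\<Sum>i\<in>Ralt. ?c i * (Y i Exp1 - Y i Exp0))"
    using ET by simp
  finally have 1: "measure_pmf.expectation (Zdist N Rego pz) (IEhat N Ralt e A pz Y)
     = (1 / real (card Ralt)) * (\<Sum>i\<in>Ralt. ?c i * (Y i Exp1 - Y i Exp0))" .
  have "measure_pmf.expectation (Zdist N Rego pz) (IEhat_adj N Rego Ralt e A pz \<delta> Y)
     = (1 / real (card Ralt)) * (\<Sum>i\<in>Ralt. (1 / ?c i) * measure_pmf.expectation (Zdist N Rego pz) (?T i))"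
    unfolding IEhat_adj_def by (simp add: intZ Bochner_Integration.integral_sum)
  also have "\<dots> = (1 / real (card Ralt)) * (\<Sum>i\<in>Ralt. Y i Exp1 - Y i Exp0)"
    using ET nonzero by simp
  finally have 2: "measure_pmf.expectation (Zdist N Rego pz) (IEhat_adj N Rego Ralt e A pz \<delta> Y) = IE Ralt Y"
    unfolding IE_def .
  from 1 2 show ?thesis by blast
qed

end
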